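(* Let $\beta\in(0,1)$. With the medium-expectation rounding defined in the context, suppose $|\mathcal{M}_1^*(k)|\le k^\beta$. If $X_i$ ($i\in\mathcal{M}_1^*(k)$) are independent indicators with $\mathbb{E}[X_i]=p_i$ and $Y_i$ ($i\in\mathcal{M}_1^*(k)$) are independent indicators with $\mathbb{E}[Y_i]=q_i$, then $$\left\|\sum_{i\in\mathcal{M}_1^*(k)}X_i-\sum_{i\in\mathcal{M}_1^*(k)}Y_i\right\|\le\frac{1}{k^{1-\beta}}.$$
   Context: $\|\cdot\|$ is total variation distance. Let $k$ be a positive integer, $\alpha\in(0,1)$, and $p_1,\dots,p_n\in[0,1]$. For $j=0,1,\dots,\lfloor k/2\rfloor$ let $I_j=[j/k,(j+1)/k)$ if $j<\lfloor k/2\rfloor$ and $I_{\lfloor k/2\rfloor}=[\lfloor k/2\rfloor/k,1/2]$; let $I^*_j=\{i:p_i\in I_j\}=\{j_1,\dots,j_{n_j}\}$ (listed in some fixed order, $n_j=|I^*_j|$), $p^j_i:=p_{j_i}$ and $\delta^j_i:=p^j_i-j/k$. Let $\mathcal{M}_1^*(k)=\bigcup_{j=\lfloor k^\alpha\rfloor}^{\lfloor k/2\rfloor}I^*_j$. Medium-expectation rounding: for $j=\lfloor k^\alpha\rfloor,\dots,\lfloor k/2\rfloor$ let $S_j=\sum_{i=1}^{n_j}\delta^j_i$, $m_j=\lfloor kS_j\rfloor$, and set $q_{j_i}=(j+1)/k$ for $i=1,\dots,m_j$ and $q_{j_i}=j/k$ for $i=m_j+1,\dots,n_j$. *)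

theory Defs
  imports "HOL-Probability.Probability"
begin

definition Iint :: "nat \<Rightarrow> nat \<Rightarrow> real set" where
  "Iint k j = (if j < k div 2 then {real j / real k ..< (real j + 1) / real k}
               else {real j / real k .. 1/2})"

definition Istar :: "nat \<Rightarrow> nat \<Rightarrow> (nat \<Rightarrow> real) \<Rightarrow> nat \<Rightarrow> nat set" where
  "Istar k n p j = {i. i < n \<and> p i \<in> Iint k j}"

definition jrange :: "nat \<Rightarrow> real \<Rightarrow> nat set" where
  "jrange k \<alpha> = {nat \<lfloor>real k powr \<alpha>\<rfloor> .. k div 2}"

definition M1star :: "nat \<Rightarrow> real \<Rightarrow> nat \<Rightarrow> (nat \<Rightarrow> real) \<Rightarrow> nat set" where
  "M1star k \<alpha> n p = (\<Union>j\<in>jrange k \<alpha>. Istar k n p j)"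

definition Ssum :: "nat \<Rightarrow> nat \<Rightarrow> (nat \<Rightarrow> real) \<Rightarrow> nat \<Rightarrow> real" where
  "Ssum k n p j = (\<Sum>i\<in>Istar k n p j. p i - real j / real k)"

text \<open>Medium-expectation rounding: ord j is the fixed listing j_1,...,j_{n_j} of I*_j
  (0-based list positions), and q is the rounded vector on M_1^*(k).\<close>
definition medium_rounding ::
  "nat \<Rightarrow> real \<Rightarrow> nat \<Rightarrow> (nat \<Rightarrow> real) \<Rightarrow> (nat \<Rightarrow> nat list) \<Rightarrow> (nat \<Rightarrow> real) \<Rightarrow> bool" where
  "medium_rounding k \<alpha> n p ord q \<longleftrightarrow>
     (\<forall>j\<in>jrange k \<alpha>. distinct (ord j) \<and> set (ord j) = Istar k n p j \<and>
        (\<forall>t < length (ord j).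
           q (ord j ! t) = (if int t < \<lfloor>real k * Ssum k n p j\<rfloor>
                            then (real j + 1) / real k else real j / real k)))"

definition sum_indicators_law :: "nat set \<Rightarrow> (nat \<Rightarrow> real) \<Rightarrow> nat pmf" where
  "sum_indicators_law A p =
     map_pmf (\<lambda>f. \<Sum>i\<in>A. if f i then 1 else 0)
             (Pi_pmf A False (\<lambda>i. bernoulli_pmf (p i)))"

definition tv_dist :: "'a pmf \<Rightarrow> 'a pmf \<Rightarrow> real" where
  "tv_dist M N = (SUP A. \<bar>measure_pmf.prob M A - measure_pmf.prob N A\<bar>)"

end

theory Submission imports Defs begin

lemma bern_bind_prob:
  assumes "0 \<le> a" "a \<le> 1"
  shows "measure_pmf.prob (bind_pmf (bernoulli_pmf a) F) S =
         a * measure_pmf.prob (F True) S + (1 - a) * measure_pmf.prob (F False) S"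
proof -
  have "emeasure (measure_pmf (bind_pmf (bernoulli_pmf a) F)) S
      = (\<integral>\<^sup>+y. ennreal (measure_pmf.prob (F y) S) \<partial>bernoulli_pmf a)"
    by (subst emeasure_bind_pmf) (simp add: measure_pmf.emeasure_eq_measure)
  also have "\<dots> = ennreal (measure_pmf.prob (F True) S * a + measure_pmf.prob (F False) S * (1 - a))"
    using assms by (subst nn_integral_bernoulli_pmf) (auto simp: ennreal_mult' ennreal_plus)
  finally have e: "ennreal (measure_pmf.prob (bind_pmf (bernoulli_pmf a) F) S) =
      ennreal (measure_pmf.prob (F True) S * a + measure_pmf.prob (F False) S * (1 - a))"
    by (simp only: measure_pmf.emeasure_eq_measure)
  have "measure_pmf.prob (bind_pmf (bernoulli_pmf a) F) S =
      measure_pmf.prob (F True) S * a + measure_pmf.prob (F False) S * (1 - a)"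
    using e by (subst (asm) ennreal_inj) (auto intro!: add_nonneg_nonneg mult_nonneg_nonneg simp: assms)
  then show ?thesis by (simp add: algebra_simps)
qed

lemma arith_bound:
  fixes P Q a b c s :: real
  assumes "0 \<le> P" "P \<le> 1" "\<bar>a\<bar> \<le> s" "\<bar>b\<bar> \<le> s" "\<bar>c\<bar> \<le> 1"
  shows "\<bar>P * a + (1 - P) * b + (P - Q) * c\<bar> \<le> s + \<bar>P - Q\<bar>"
proof -
  have "\<bar>P * a\<bar> \<le> P * s" using assms by (simp add: abs_mult mult_left_mono)
  moreover have "\<bar>(1 - P) * b\<bar> \<le> (1 - P) * s" using assms by (simp add: abs_mult mult_left_mono)
  moreover have "\<bar>(P - Q) * c\<bar> \<le> \<bar>P - Q\<bar>" using assms
    by (simp add: abs_mult mult_left_le)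
  moreover have "P * s + (1 - P) * s = s" by (simp add: algebra_simps)
  ultimately show ?thesis by (smt (verit))
qed

lemma Pi_bern_bound:
  assumes "finite I"
  shows "(\<forall>i\<in>I. 0 \<le> P i \<and> P i \<le> 1 \<and> 0 \<le> Q i \<and> Q i \<le> 1) \<Longrightarrow>
    \<bar>measure_pmf.prob (Pi_pmf I d (\<lambda>i. bernoulli_pmf (P i))) S
     - measure_pmf.prob (Pi_pmf I d (\<lambda>i. bernoulli_pmf (Q i))) S\<bar> \<le> (\<Sum>i\<in>I. \<bar>P i - Q i\<bar>)"
  using assms
proof (induction I arbitrary: S rule: finite_induct)
  case empty
  then show ?case by simp
next
  case (insert x A)
  let ?hP = "\<lambda>y. measure_pmf.prob (Pi_pmf A d (\<lambda>i. bernoulli_pmf (P i))) ((\<lambda>f. f(x:=y)) -` S)"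
  let ?hQ = "\<lambda>y. measure_pmf.prob (Pi_pmf A d (\<lambda>i. bernoulli_pmf (Q i))) ((\<lambda>f. f(x:=y)) -` S)"
  have eq: "Pi_pmf (insert x A) d R = bind_pmf (R x) (\<lambda>y. map_pmf (\<lambda>f. f(x:=y)) (Pi_pmf A d R))" for R
    using insert.hyps by (simp add: Pi_pmf_insert' map_pmf_def)
  have Px: "0 \<le> P x" "P x \<le> 1" "0 \<le> Q x" "Q x \<le> 1" using insert.prems by auto
  have pP: "measure_pmf.prob (Pi_pmf (insert x A) d (\<lambda>i. bernoulli_pmf (P i))) S
     = P x * ?hP True + (1 - P x) * ?hP False"
    by (subst eq, subst bern_bind_prob) (use Px in auto)
  have pQ: "measure_pmf.prob (Pi_pmf (insert x A) d (\<lambda>i. bernoulli_pmf (Q i))) S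
     = Q x * ?hQ True + (1 - Q x) * ?hQ False"
    by (subst eq, subst bern_bind_prob) (use Px in auto)
  have IH: "\<bar>?hP y - ?hQ y\<bar> \<le> (\<Sum>i\<in>A. \<bar>P i - Q i\<bar>)" for y
    using insert.IH[of "(\<lambda>f. f(x:=y)) -` S"] insert.prems by auto
  have c: "\<bar>?hQ True - ?hQ False\<bar> \<le> 1"
    by (simp add: abs_le_iff) (smt (verit) measure_pmf.prob_le_1 measure_nonneg)
  have "P x * ?hP True + (1 - P x) * ?hP False - (Q x * ?hQ True + (1 - Q x) * ?hQ False)
      = P x * (?hP True - ?hQ True) + (1 - P x) * (?hP False - ?hQ False) + (P x - Q x) * (?hQ True - ?hQ False)"
    by (simp add: algebra_simps)
  then have "\<bar>P x * ?hP True + (1 - P x) * ?hP False - (Q x * ?hQ True + (1 - Q x) * ?hQ False)\<bar>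
      \<le> (\<Sum>i\<in>A. \<bar>P i - Q i\<bar>) + \<bar>P x - Q x\<bar>"
    using arith_bound[OF Px(1,2) IH IH c] by simp
  then show ?case using pP pQ insert.hyps by simp
qed


lemma pq_close:
  fixes k n :: nat and \<alpha> :: real and p q :: "nat \<Rightarrow> real" and ord :: "nat \<Rightarrow> nat list"
  assumes "k > 0" "\<forall>i<n. 0 \<le> p i \<and> p i \<le> 1" "medium_rounding k \<alpha> n p ord q"
    and i: "i \<in> M1star k \<alpha> n p"
  shows "0 \<le> p i \<and> p i \<le> 1 \<and> 0 \<le> q i \<and> q i \<le> 1 \<and> \<bar>p i - q i\<bar> \<le> 1 / real k"
proof -
  obtain j where j: "j \<in> jrange k \<alpha>" "i \<in> Istar k n p j" using i unfolding M1star_def by auto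
  have jle: "j \<le> k div 2" using j(1) unfolding jrange_def by auto
  have iN: "i < n" and pI: "p i \<in> Iint k j" using j(2) unfolding Istar_def by auto
  have mr: "distinct (ord j) \<and> set (ord j) = Istar k n p j \<and>
        (\<forall>t < length (ord j).
           q (ord j ! t) = (if int t < \<lfloor>real k * Ssum k n p j\<rfloor>
                            then (real j + 1) / real k else real j / real k))"
    using assms(3) j(1) unfolding medium_rounding_def by blast
  then obtain t where t: "t < length (ord j)" "ord j ! t = i" using j(2) by (metis in_set_conv_nth)
  have qv: "q i = (real j + 1) / real k \<or> q i = real j / real k"
    using mr t by (metis (full_types))
  have kpos: "real k > 0" using assms(1) by simp
  have j1: "real j + 1 \<le> real k" using jle assms(1) by (metis add.commute div_le_dividend div_less_dividend le_less_trans less_numeral_extra(1) not_less of_nat_1 of_nat_add of_nat_le_iff one_less_numeral_iff semiring_norm(76) Suc_leI Suc_eq_plus1) 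
  have half: "1/2 \<le> (real j + 1) / real k" if "\<not> j < k div 2"
  proof -
    have "j = k div 2" using that jle by simp
    then have "k \<le> 2 * (j + 1)" by presburger
    then have "real k \<le> real (2 * (j + 1))" by (simp only: of_nat_le_iff)
    then have "real k \<le> 2 * (real j + 1)" by simp
    then show ?thesis using kpos by (simp add: field_simps)
  qed
  have plo: "real j / real k \<le> p i" and phi: "p i \<le> (real j + 1) / real k"
  proof -
    show "real j / real k \<le> p i" using pI unfolding Iint_def by (auto split: if_splits)
    show "p i \<le> (real j + 1) / real k"
    proof (cases "j < k div 2")
      case True then show ?thesis using pI unfolding Iint_def by auto
    next
      case False
      then have "p i \<le> 1/2" using pI unfolding Iint_def by auto
      then show ?thesis using half[OF False] by linarith
    qed
  qed
  have "0 \<le> q i \<and> q i \<le> 1" using qv kpos j1 by (auto simp: divide_le_eq_1)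
  moreover have "\<bar>p i - q i\<bar> \<le> 1 / real k"
    using qv plo phi kpos by (auto simp: abs_le_iff diff_divide_distrib add_divide_distrib)
  ultimately show ?thesis using assms(2) iN by auto
qed

theorem mainTheorem12:
  fixes k n :: nat and \<alpha> \<beta> :: real and p q :: "nat \<Rightarrow> real" and ord :: "nat \<Rightarrow> nat list"
  assumes "k > 0" and "0 < \<alpha>" and "\<alpha> < 1" and "0 < \<beta>" and "\<beta> < 1"
    and "\<forall>i<n. 0 \<le> p i \<and> p i \<le> 1"
    and "medium_rounding k \<alpha> n p ord q"
    and "real (card (M1star k \<alpha> n p)) \<le> real k powr \<beta>"
  shows "tv_dist (sum_indicators_law (M1star k \<alpha> n p) p)
                 (sum_indicators_law (M1star k \<alpha> n p) q) \<le> 1 / real k powr (1 - \<beta>)"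
proof -
  let ?M = "M1star k \<alpha> n p"
  have fin: "finite ?M" unfolding M1star_def Istar_def jrange_def by auto
  have cl: "\<forall>i\<in>?M. 0 \<le> p i \<and> p i \<le> 1 \<and> 0 \<le> q i \<and> q i \<le> 1 \<and> \<bar>p i - q i\<bar> \<le> 1 / real k"
    using pq_close[OF assms(1,6,7)] by blast
  have kpos: "real k > 0" using assms(1) by simp
  have "(\<Sum>i\<in>?M. \<bar>p i - q i\<bar>) \<le> (\<Sum>i\<in>?M. 1 / real k)"
    using cl by (intro sum_mono) auto
  also have "\<dots> = real (card ?M) / real k" by simp
  also have "\<dots> \<le> real k powr \<beta> / real k"
    using assms(8) kpos by (simp add: divide_right_mono)
  also have "\<dots> = 1 / real k powr (1 - \<beta>)"
    using kpos by (simp add: powr_diff)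
  finally have sb: "(\<Sum>i\<in>?M. \<bar>p i - q i\<bar>) \<le> 1 / real k powr (1 - \<beta>)" .
  show ?thesis
    unfolding tv_dist_def
  proof (rule cSUP_least)
    fix A
    let ?g = "\<lambda>f. \<Sum>i\<in>?M. if f i then 1 else (0::nat)"
    have "\<bar>measure_pmf.prob (Pi_pmf ?M False (\<lambda>i. bernoulli_pmf (p i))) (?g -` A)
      - measure_pmf.prob (Pi_pmf ?M False (\<lambda>i. bernoulli_pmf (q i))) (?g -` A)\<bar>
      \<le> (\<Sum>i\<in>?M. \<bar>p i - q i\<bar>)"
      using Pi_bern_bound[OF fin] cl by blast
    then show "\<bar>measure_pmf.prob (sum_indicators_law ?M p) A
       - measure_pmf.prob (sum_indicators_law ?M q) A\<bar> \<le> 1 / real k powr (1 - \<beta>)"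
      using sb unfolding sum_indicators_law_def by simp
  qed simp
qed

end
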